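(* Let $q\in\mathbb{C}$ with $0<|q|<1$. Then: (i) for every integer $n\geq 1$, \[ \sum_{m=1}^{2n}(-1)^m q^{\frac{m(m-1)}{2}-mn} \;=\; 0; \] (ii) for every integer $n$ and every integer $r\geq 0$, \[ \sum_{m=1}^{\infty}\sum_{s=-r}^{r}(-1)^m q^{\frac{m(m-1)}{2}-m(n+s)}(1-q^m) \;=\; \sum_{m=1}^{\infty}\sum_{s=-r}^{r}(-1)^m q^{\frac{m(m-1)}{2}-m(-n+s)}(1-q^m). \]
   Context: In (ii) the inner sum runs over all integers $s$ with $-r\le s\le r$. *)

theory Defs
  imports Complex_Main
begin

end

theory Submission imports Defs begin

lemma T2: "2 * ((x::int) * (x - 1) div 2) = x * (x - 1)"
proof -
  have "even (x * (x - 1))" by auto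
  then show ?thesis by simp
qed

definition aa :: "complex \<Rightarrow> int \<Rightarrow> nat \<Rightarrow> complex" where
  "aa q N m = (-1)^m * q powi (int m * (int m - 1) div 2 - int m * N)"

lemma aa_Suc:
  assumes "q \<noteq> 0"
  shows "aa q N (Suc m) = - aa q N m * q powi (int m - N)"
proof -
  have e: "int (Suc m) * (int (Suc m) - 1) div 2 - int (Suc m) * N
     = (int m * (int m - 1) div 2 - int m * N) + (int m - N)"
  proof -
    have "2 * (int (Suc m) * (int (Suc m) - 1) div 2) = 2 * (int m * (int m - 1) div 2 + int m)"
      using T2[of "int (Suc m)"] T2[of "int m"] by (simp add: algebra_simps)
    then show ?thesis by (simp add: algebra_simps)
  qed
  show ?thesis unfolding aa_def e using assms by (simp add: power_int_add)
qed

lemma summable_aa: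
  assumes "q \<noteq> 0" "norm q < 1"
  shows "summable (aa q N)"
proof (rule summable_ratio_test[where c="norm q" and N="nat (N+1)"])
  show "norm q < 1" by fact
  fix n assume n: "nat (N+1) \<le> n"
  have k: "int n - N \<ge> 1" using n by linarith
  have "norm (q powi (int n - N)) = norm q ^ nat (int n - N)"
    using k by (simp add: power_int_def norm_power)
  also have "\<dots> \<le> norm q ^ 1"
    by (rule power_decreasing) (use k assms in auto)
  finally have nq: "norm (q powi (int n - N)) \<le> norm q" by simp
  then show "norm (aa q N (Suc n)) \<le> norm q * norm (aa q N n)"
    unfolding aa_Suc[OF assms(1)] using mult_left_mono[OF nq norm_ge_zero[of "aa q N n"]]
    by (simp add: norm_mult mult.commute)
qed

lemma aa_refl:
  assumes "N \<ge> 0"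
  shows "aa q N (Suc (j + 2 * nat N)) = - aa q (-N-1) j"
proof -
  have e: "int (Suc (j + 2 * nat N)) * (int (Suc (j + 2 * nat N)) - 1) div 2 - int (Suc (j + 2 * nat N)) * N
      = int j * (int j - 1) div 2 - int j * (-N-1)"
  proof -
    have "2 * (int (Suc (j + 2 * nat N)) * (int (Suc (j + 2 * nat N)) - 1) div 2 - int (Suc (j + 2 * nat N)) * N)
      = 2 * (int j * (int j - 1) div 2 - int j * (-N-1))"
      using T2[of "int (Suc (j + 2 * nat N))"] T2[of "int j"] assms
      by (simp add: algebra_simps)
    then show ?thesis by simp
  qed
  show ?thesis unfolding aa_def e by (simp add: power_add)
qed

lemma part1:
  "(\<Sum>m\<in>{1..2*n}. (-1) ^ nat m * q powi (m * (m - 1) div 2 - m * n)) = (0::complex)"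
proof -
  let ?f = "\<lambda>m::int. (-1) ^ nat m * q powi (m * (m - 1) div 2 - m * n)"
  have fl: "?f (2*n+1-m) = - ?f m" if "m \<in> {1..2*n}" for m
  proof -
    have e: "(2*n+1-m) * ((2*n+1-m) - 1) div 2 - (2*n+1-m) * n = m * (m - 1) div 2 - m * n"
    proof -
      have "2 * ((2*n+1-m) * ((2*n+1-m) - 1) div 2 - (2*n+1-m) * n) = 2 * (m * (m - 1) div 2 - m * n)"
        using T2[of "2*n+1-m"] T2[of m] by (simp add: algebra_simps)
      then show ?thesis by simp
    qed
    have s: "nat (2*n+1-m) + nat m = Suc (2 * nat n)" using that by auto
    have "(-1::complex) ^ nat (2*n+1-m) = (-1) ^ nat (2*n+1-m) * ((-1) ^ nat m * (-1) ^ nat m)"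
      by (simp flip: power_add)
    also have "\<dots> = (-1) ^ (nat (2*n+1-m) + nat m) * (-1) ^ nat m"
      by (simp add: power_add mult.assoc)
    also have "\<dots> = - ((-1) ^ nat m)" unfolding s by simp
    finally have "(-1::complex) ^ nat (2*n+1-m) = - ((-1) ^ nat m)" .
    then show ?thesis using e by simp
  qed
  have "sum ?f {1..2*n} = sum (\<lambda>m. ?f (2*n+1-m)) {1..2*n}"
    by (rule sum.reindex_bij_witness[where i="\<lambda>m. 2*n+1-m" and j="\<lambda>m. 2*n+1-m"]) auto
  also have "\<dots> = - sum ?f {1..2*n}" using fl by (simp add: sum_negf)
  finally show ?thesis by simp
qed

lemma nat_1_int[simp]: "nat (1 + int a) = Suc a" by simp

lemma finite_zero:
  assumes "N \<ge> 0"
  shows "(\<Sum>k<2*nat N. aa q N (Suc k)) = 0"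
proof -
  have "(\<Sum>k<2*nat N. aa q N (Suc k)) =
     (\<Sum>m\<in>{1..2*N}. (-1) ^ nat m * q powi (m * (m - 1) div 2 - m * N))"
    by (rule sum.reindex_bij_witness[where i="\<lambda>m. nat m - 1" and j="\<lambda>k. int (Suc k)"])
       (use assms in \<open>auto simp: aa_def\<close>)
  also have "\<dots> = 0" by (rule part1)
  finally show ?thesis .
qed

definition gg :: "complex \<Rightarrow> int \<Rightarrow> complex" where
  "gg q N = (\<Sum>k. aa q N (Suc k))"

lemma aa_0: "aa q M 0 = 1" by (simp add: aa_def)

lemma g_rel0:
  assumes "q \<noteq> 0" "norm q < 1" "N \<ge> 0"
  shows "gg q N + gg q (-N-1) = -1"
proof -
  have hs: "summable (\<lambda>k. aa q N (Suc k))"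
    using summable_aa[OF assms(1,2)] by (simp add: summable_Suc_iff)
  have "gg q N = (\<Sum>j. aa q N (Suc (j + 2*nat N))) + (\<Sum>k<2*nat N. aa q N (Suc k))"
    unfolding gg_def by (rule suminf_split_initial_segment[OF hs])
  also have "\<dots> = (\<Sum>j. - aa q (-N-1) j)"
    using finite_zero[OF assms(3)] aa_refl[OF assms(3)] by simp
  also have "\<dots> = - (\<Sum>j. aa q (-N-1) j)"
    by (rule suminf_minus[OF summable_aa[OF assms(1,2)]])
  also have "(\<Sum>j. aa q (-N-1) j) = 1 + gg q (-N-1)"
    using suminf_split_head[OF summable_aa[OF assms(1,2)], of "-N-1"] unfolding gg_def aa_0 by simp
  finally show ?thesis by simp
qed

lemma g_rel:
  assumes "q \<noteq> 0" "norm q < 1"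
  shows "gg q N + gg q (-N-1) = -1"
proof (cases "N \<ge> 0")
  case True then show ?thesis using g_rel0[OF assms] by blast
next
  case False
  then have "gg q (-N-1) + gg q (-(-N-1)-1) = -1" using g_rel0[OF assms, of "-N-1"] by simp
  then show ?thesis by (simp add: add.commute)
qed

lemma Fk_eq:
  assumes "q \<noteq> 0"
  shows "(let m = int (Suc k) in (-1) ^ nat m * q powi (m * (m - 1) div 2 - m * N) * (1 - q powi m))
     = aa q N (Suc k) - aa q (N-1) (Suc k)"
proof -
  have "q powi (int (Suc k) * (int (Suc k) - 1) div 2 - int (Suc k) * N) * q powi (int (Suc k))
     = q powi (int (Suc k) * (int (Suc k) - 1) div 2 - int (Suc k) * (N - 1))"
    using assms by (simp add: power_int_add[symmetric] algebra_simps)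
  then show ?thesis unfolding aa_def Let_def by (simp add: algebra_simps)
qed

lemma Fk_sum:
  assumes "q \<noteq> 0" "norm q < 1"
  shows "summable (\<lambda>k. let m = int (Suc k) in (-1) ^ nat m * q powi (m * (m - 1) div 2 - m * N) * (1 - q powi m))"
    and "(\<Sum>k. let m = int (Suc k) in (-1) ^ nat m * q powi (m * (m - 1) div 2 - m * N) * (1 - q powi m))
        = gg q N - gg q (N-1)"
proof -
  have h1: "summable (\<lambda>k. aa q M (Suc k))" for M
    using summable_aa[OF assms] by (simp add: summable_Suc_iff)
  show "summable (\<lambda>k. let m = int (Suc k) in (-1) ^ nat m * q powi (m * (m - 1) div 2 - m * N) * (1 - q powi m))"
    unfolding Fk_eq[OF assms(1)] by (intro summable_diff h1)
  show "(\<Sum>k. let m = int (Suc k) in (-1) ^ nat m * q powi (m * (m - 1) div 2 - m * N) * (1 - q powi m))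
        = gg q N - gg q (N-1)"
    unfolding Fk_eq[OF assms(1)] gg_def by (intro suminf_diff[symmetric] h1)
qed

lemma f_even:
  assumes "q \<noteq> 0" "norm q < 1"
  shows "gg q (-N) - gg q (-N-1) = gg q N - gg q (N-1)"
  using g_rel[OF assms, of N] g_rel[OF assms, of "N-1"] by (simp add: algebra_simps)

theorem lemma2:
  fixes q :: complex
  assumes "0 < norm q" and "norm q < 1"
  shows "(\<forall>n::int. n \<ge> 1 \<longrightarrow>
            (\<Sum>m\<in>{1..2*n}. (-1) ^ nat m * q powi (m * (m - 1) div 2 - m * n)) = 0)
       \<and> (\<forall>(n::int) (r::int). r \<ge> 0 \<longrightarrow>
            (\<Sum>k. \<Sum>s\<in>{-r..r}. let m = int (Suc k) in
                (-1) ^ nat m * q powi (m * (m - 1) div 2 - m * (n + s)) * (1 - q powi m))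
          = (\<Sum>k. \<Sum>s\<in>{-r..r}. let m = int (Suc k) in
                (-1) ^ nat m * q powi (m * (m - 1) div 2 - m * (- n + s)) * (1 - q powi m)))"
proof -
  have q0: "q \<noteq> 0" using assms(1) by auto
  note A = q0 assms(2)
  have P2: "(\<Sum>k. \<Sum>s\<in>{-r..r}. let m = int (Suc k) in
                (-1) ^ nat m * q powi (m * (m - 1) div 2 - m * (n + s)) * (1 - q powi m))
          = (\<Sum>k. \<Sum>s\<in>{-r..r}. let m = int (Suc k) in
                (-1) ^ nat m * q powi (m * (m - 1) div 2 - m * (- n + s)) * (1 - q powi m))"
    for n r :: int
  proof -
    have "(\<Sum>k. \<Sum>s\<in>{-r..r}. let m = int (Suc k) in
                (-1) ^ nat m * q powi (m * (m - 1) div 2 - m * (n + s)) * (1 - q powi m))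
        = (\<Sum>s\<in>{-r..r}. gg q (n+s) - gg q (n+s-1))"
      by (subst suminf_sum, rule Fk_sum(1)[OF A], rule sum.cong[OF refl], rule Fk_sum(2)[OF A])
    also have "\<dots> = (\<Sum>s\<in>{-r..r}. gg q (n-s) - gg q (n-s-1))"
      by (rule sum.reindex_bij_witness[where i="uminus" and j="uminus"]) auto
    also have "\<dots> = (\<Sum>s\<in>{-r..r}. gg q (-n+s) - gg q (-n+s-1))"
      using f_even[OF A] by (intro sum.cong refl) (metis minus_diff_eq uminus_add_conv_diff)
    also have "\<dots> = (\<Sum>k. \<Sum>s\<in>{-r..r}. let m = int (Suc k) in
                (-1) ^ nat m * q powi (m * (m - 1) div 2 - m * (- n + s)) * (1 - q powi m))"
      by (subst suminf_sum, rule Fk_sum(1)[OF A], rule sum.cong[OF refl], rule Fk_sum(2)[OF A, symmetric])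
    finally show ?thesis .
  qed
  show ?thesis using part1 P2 by blast
qed

end
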